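(* Let $S=(d,N_1,\dots,N_L)$ be a neural network architecture, set $N_0=d$, let $\Omega\subset\mathbb{R}^d$, and let $\varrho:\mathbb{R}\to\mathbb{R}$ be locally Lipschitz continuous. Then $\mathcal{RNN}_\varrho^\Omega(S)$ contains at most $\sum_{\ell=1}^L(N_{\ell-1}+1)N_\ell$ linearly independent centers.
   Context: A neural network with architecture $S=(N_0,\dots,N_L)$ is a family $\Phi=((A_\ell,b_\ell))_{\ell=1}^L$, $A_\ell\in\mathbb{R}^{N_\ell\times N_{\ell-1}}$, $b_\ell\in\mathbb{R}^{N_\ell}$; $\mathcal{NN}(S)$ is the set of these. $\mathrm{R}_\varrho^\Omega(\Phi):\Omega\to\mathbb{R}^{N_L}$, $x\mapsto x_L$, where $x_0=x$, $x_\ell=\varrho(A_\ell x_{\ell-1}+b_\ell)$ for $1\le\ell\le L-1$ (componentwise), $x_L=A_Lx_{L-1}+b_L$; $\mathcal{RNN}_\varrho^\Omega(S)=\{\mathrm{R}_\varrho^\Omega(\Phi):\Phi\in\mathcal{NN}(S)\}$. An element $f$ of a subset $A$ of a vector space is a center of $A$ if $\lambda f+(1-\lambda)g\in A$ for all $g\in A$ and all $\lambda\in[0,1]$. *)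

theory Defs
  imports "HOL-Analysis.Analysis"
begin

(* Vectors in R^n are represented as  nat \<Rightarrow> real  with all components of index \<ge> n equal to 0.
   A layer l (1 \<le> l \<le> L) of a network \<Phi> is  \<Phi> l = (A_l, b_l)  with
   A_l :: nat \<Rightarrow> nat \<Rightarrow> real  (only entries i < N l, j < N (l-1) are used) and
   b_l :: nat \<Rightarrow> real  (only entries i < N l are used). *)

type_synonym network = "nat \<Rightarrow> (nat \<Rightarrow> nat \<Rightarrow> real) \<times> (nat \<Rightarrow> real)"

definition affine_layer :: "(nat \<Rightarrow> nat) \<Rightarrow> network \<Rightarrow> nat \<Rightarrow> (nat \<Rightarrow> real) \<Rightarrow> (nat \<Rightarrow> real)" where
  "affine_layer N \<Phi> l x =
     (\<lambda>i. if i < N l then (\<Sum>j<N (l - 1). fst (\<Phi> l) i j * x j) + snd (\<Phi> l) i else 0)"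

fun hidden :: "(real \<Rightarrow> real) \<Rightarrow> (nat \<Rightarrow> nat) \<Rightarrow> network \<Rightarrow> (nat \<Rightarrow> real) \<Rightarrow> nat \<Rightarrow> (nat \<Rightarrow> real)" where
  "hidden \<rho> N \<Phi> x 0 = x"
| "hidden \<rho> N \<Phi> x (Suc l) =
     (\<lambda>i. if i < N (Suc l) then \<rho> (affine_layer N \<Phi> (Suc l) (hidden \<rho> N \<Phi> x l) i) else 0)"

(* R_\<rho>^\<Omega>(\<Phi>): x \<mapsto> x_L on \<Omega>; extended by 0 outside \<Omega> so that equality of
   realizations is equality of functions on \<Omega>. *)
definition realization :: "(real \<Rightarrow> real) \<Rightarrow> (nat \<Rightarrow> nat) \<Rightarrow> nat \<Rightarrow> (nat \<Rightarrow> real) set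
      \<Rightarrow> network \<Rightarrow> (nat \<Rightarrow> real) \<Rightarrow> (nat \<Rightarrow> real)" where
  "realization \<rho> N L \<Omega> \<Phi> =
     (\<lambda>x. if x \<in> \<Omega> then affine_layer N \<Phi> L (hidden \<rho> N \<Phi> x (L - 1)) else (\<lambda>_. 0))"

definition RNN :: "(real \<Rightarrow> real) \<Rightarrow> (nat \<Rightarrow> nat) \<Rightarrow> nat \<Rightarrow> (nat \<Rightarrow> real) set
      \<Rightarrow> ((nat \<Rightarrow> real) \<Rightarrow> (nat \<Rightarrow> real)) set" where
  "RNN \<rho> N L \<Omega> = {realization \<rho> N L \<Omega> \<Phi> | \<Phi>. True}"

definition is_center :: "('a \<Rightarrow> 'b \<Rightarrow> real) set \<Rightarrow> ('a \<Rightarrow> 'b \<Rightarrow> real) \<Rightarrow> bool" where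
  "is_center A f \<longleftrightarrow> f \<in> A \<and>
     (\<forall>g\<in>A. \<forall>t::real. 0 \<le> t \<and> t \<le> 1 \<longrightarrow> (\<lambda>x i. t * f x i + (1 - t) * g x i) \<in> A)"

definition lin_indep :: "('a \<Rightarrow> 'b \<Rightarrow> real) set \<Rightarrow> bool" where
  "lin_indep C \<longleftrightarrow> (\<forall>c. (\<forall>x i. (\<Sum>f\<in>C. c f * f x i) = 0) \<longrightarrow> (\<forall>f\<in>C. c f = 0))"

definition locally_lipschitz :: "(real \<Rightarrow> real) \<Rightarrow> bool" where
  "locally_lipschitz \<rho> \<longleftrightarrow> (\<forall>x. \<exists>e>0. \<exists>K. K-lipschitz_on (cball x e) \<rho>)"

end

theory Submission
  imports Defs
begin

lemma cell_pick:
  fixes x R :: real and m :: nat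
  assumes "R > 0" "m > 0" "\<bar>x\<bar> \<le> R"
  shows "\<exists>g<m. \<bar>x - (- R + (2 * real g + 1) * R / m)\<bar> \<le> R / m"
proof -
  define u where "u = (x + R) * m / (2 * R)"
  have u0: "0 \<le> u" using assms by (simp add: u_def)
  have um: "u \<le> m" using assms by (simp add: u_def field_simps)
  define g where "g = min (m - 1) (nat \<lfloor>u\<rfloor>)"
  have g1: "real g \<le> u" using u0 by (simp add: g_def min_def) linarith
  have g2: "u \<le> real g + 1"
  proof (cases "nat \<lfloor>u\<rfloor> \<le> m - 1")
    case True then show ?thesis using u0 by (simp add: g_def min_def)
  next
    case False then show ?thesis using um assms(2) by (simp add: g_def min_def of_nat_diff)
  qed
  have gm: "g < m" using assms(2) by (simp add: g_def)
  have xu: "x = - R + 2 * u * R / m" using assms by (simp add: u_def field_simps)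
  have "x - (- R + (2 * real g + 1) * R / m) = (2 * u - 2 * real g - 1) * (R / m)"
    unfolding xu by (simp add: field_simps add_divide_distrib[symmetric])
  moreover have "\<bar>2 * u - 2 * real g - 1\<bar> \<le> 1" using g1 g2 by linarith
  moreover have "R / m \<ge> 0" using assms by simp
  ultimately have "\<bar>x - (- R + (2 * real g + 1) * R / m)\<bar> \<le> 1 * (R / m)"
    by (metis abs_mult abs_of_nonneg mult_right_mono)
  then show ?thesis using gm by auto
qed

lemma ennreal_small_zero:
  fixes x :: ennreal
  assumes "\<And>m::nat. x \<le> ennreal (c / real (Suc m))"
  shows "x = 0"
proof -
  have "x \<noteq> top" using assms[of 0] by (metis ennreal_neq_top neq_top_trans)
  then obtain y where y: "x = ennreal y" "y \<ge> 0" by (cases x) auto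
  show ?thesis
  proof (rule ccontr)
    assume "x \<noteq> 0"
    then have yp: "y > 0" using y by auto
    obtain m :: nat where m: "real m > c / y" using reals_Archimedean2 by blast
    have "c / real (Suc m) \<ge> 0"
    proof (rule ccontr)
      assume "\<not> ?thesis"
      then have "ennreal (c / real (Suc m)) = 0" by (simp add: ennreal_neg)
      then show False using assms[of m] y yp by simp
    qed
    then have "y \<le> c / real (Suc m)" using assms[of m] y by (simp add: ennreal_le_iff)
    then have "y * real (Suc m) \<le> c" by (simp add: field_simps)
    moreover have "c < y * real m" using m yp by (simp add: field_simps)
    ultimately show False using yp by (simp add: algebra_simps)
  qed
qed

lemma power_bound_aux:
  fixes c :: real and m P n :: nat
  assumes "c \<ge> 0" "m > 0" "P < n"
  shows "real m ^ P * (c / real m) ^ n \<le> c ^ n / real m"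
proof -
  have mn: "real m ^ n = real m ^ P * real m ^ (n - P)"
    using assms by (simp add: power_add[symmetric])
  have "real m \<le> real m ^ (n - P)"
  proof -
    have "real m ^ 1 \<le> real m ^ (n - P)"
      using assms by (intro power_increasing) auto
    then show ?thesis by simp
  qed
  then have "real m ^ P * real m \<le> real m ^ n" unfolding mn
    by (simp add: mult_left_mono)
  then have "c ^ n * (real m ^ P * real m) \<le> c ^ n * real m ^ n"
    using assms by (simp add: mult_left_mono)
  then show ?thesis using assms by (simp add: field_simps power_divide)
qed

lemma core_dim:
  fixes \<psi> :: "('p \<Rightarrow> real) \<Rightarrow> nat \<Rightarrow> real" and I :: "'p set" and n :: nat and a :: real
  assumes finI: "finite I" and cardI: "card I < n" and a: "a > 0"
    and lip: "\<And>R. R > 0 \<Longrightarrow> \<exists>K. \<forall>\<theta> \<theta>' \<delta>. \<delta> \<ge> 0 \<and> (\<forall>p\<in>I. \<bar>\<theta> p\<bar> \<le> R \<and> \<bar>\<theta>' p\<bar> \<le> R \<and> \<bar>\<theta> p - \<theta>' p\<bar> \<le> \<delta>)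
               \<longrightarrow> (\<forall>k<n. \<bar>\<psi> \<theta> k - \<psi> \<theta>' k\<bar> \<le> K * \<delta>)"
    and cover: "\<And>q. (\<forall>k<n. 0 \<le> q k \<and> q k \<le> a) \<Longrightarrow> \<exists>\<theta>. \<forall>k<n. \<psi> \<theta> k = q k"
  shows False
proof -
  define M where "M = PiM {..<n} (\<lambda>_. lborel :: real measure)"
  interpret product_sigma_finite "\<lambda>_::nat. lborel :: real measure" by standard
  define R :: "nat \<Rightarrow> real" where "R r = real (Suc r)" for r
  have Rpos: "R r > 0" for r by (simp add: R_def)
  have "\<forall>r. \<exists>K. \<forall>\<theta> \<theta>' \<delta>. \<delta> \<ge> 0 \<and> (\<forall>p\<in>I. \<bar>\<theta> p\<bar> \<le> R r \<and> \<bar>\<theta>' p\<bar> \<le> R r \<and> \<bar>\<theta> p - \<theta>' p\<bar> \<le> \<delta>)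
               \<longrightarrow> (\<forall>k<n. \<bar>\<psi> \<theta> k - \<psi> \<theta>' k\<bar> \<le> K * \<delta>)"
  proof
    fix r show "\<exists>K. \<forall>\<theta> \<theta>' \<delta>. \<delta> \<ge> 0 \<and> (\<forall>p\<in>I. \<bar>\<theta> p\<bar> \<le> R r \<and> \<bar>\<theta>' p\<bar> \<le> R r \<and> \<bar>\<theta> p - \<theta>' p\<bar> \<le> \<delta>)
               \<longrightarrow> (\<forall>k<n. \<bar>\<psi> \<theta> k - \<psi> \<theta>' k\<bar> \<le> K * \<delta>)"
      by (rule lip[OF Rpos[of r]])
  qed
  from choice[OF this] obtain K0 where K0': "\<forall>r. \<forall>\<theta> \<theta>' \<delta>. \<delta> \<ge> 0 \<and> (\<forall>p\<in>I. \<bar>\<theta> p\<bar> \<le> R r \<and> \<bar>\<theta>' p\<bar> \<le> R r \<and> \<bar>\<theta> p - \<theta>' p\<bar> \<le> \<delta>)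
               \<longrightarrow> (\<forall>k<n. \<bar>\<psi> \<theta> k - \<psi> \<theta>' k\<bar> \<le> K0 r * \<delta>)"
    by (rule exE)
  have K0: "\<forall>k<n. \<bar>\<psi> \<theta> k - \<psi> \<theta>' k\<bar> \<le> K0 r * \<delta>"
    if "\<delta> \<ge> 0" "\<forall>p\<in>I. \<bar>\<theta> p\<bar> \<le> R r \<and> \<bar>\<theta>' p\<bar> \<le> R r \<and> \<bar>\<theta> p - \<theta>' p\<bar> \<le> \<delta>" for r \<theta> \<theta>' \<delta>
    using K0' that by simp
  define K where "K r = \<bar>K0 r\<bar>" for r
  have K: "\<bar>\<psi> \<theta> k - \<psi> \<theta>' k\<bar> \<le> K r * \<delta>"
    if "\<delta> \<ge> 0" "\<And>p. p \<in> I \<Longrightarrow> \<bar>\<theta> p\<bar> \<le> R r \<and> \<bar>\<theta>' p\<bar> \<le> R r \<and> \<bar>\<theta> p - \<theta>' p\<bar> \<le> \<delta>" "k < n"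
    for r \<theta> \<theta>' \<delta> k
  proof -
    have hI: "\<forall>p\<in>I. \<bar>\<theta> p\<bar> \<le> R r \<and> \<bar>\<theta>' p\<bar> \<le> R r \<and> \<bar>\<theta> p - \<theta>' p\<bar> \<le> \<delta>"
      using that(2) by blast
    have "\<bar>\<psi> \<theta> k - \<psi> \<theta>' k\<bar> \<le> K0 r * \<delta>" using K0[OF that(1) hI] that(3) by blast
    also have "\<dots> \<le> K r * \<delta>" using that(1) by (simp add: K_def mult_right_mono)
    finally show ?thesis .
  qed
  have K0le: "K r \<ge> 0" for r by (simp add: K_def)
  define ctr where "ctr r m g = (\<lambda>p. - R r + (2 * real (g p) + 1) * R r / real m)"
    for r and m :: nat and g :: "'p \<Rightarrow> nat"
  define hw where "hw r m = K r * R r / real m" for r and m :: nat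
  define Box where "Box r m g = PiE {..<n} (\<lambda>k. {\<psi> (ctr r m g) k - hw r m .. \<psi> (ctr r m g) k + hw r m})"
    for r m g
  define G where "G m = PiE I (\<lambda>_. {..<m::nat})" for m
  define U where "U r m = (\<Union>g\<in>G m. Box r m g)" for r m
  define NN where "NN r = (\<Inter>m. U r (Suc m))" for r
  have Box_sets: "Box r m g \<in> sets M" for r m g
    unfolding Box_def M_def by (rule sets_PiM_I_finite) auto
  have finG: "finite (G m)" for m unfolding G_def using finI by (simp add: finite_PiE)
  have cardG: "card (G m) = m ^ card I" for m
    unfolding G_def using finI by (simp add: card_PiE)
  have U_sets: "U r m \<in> sets M" for r m
    unfolding U_def using finG Box_sets by (intro sets.finite_UN) auto
  have NN_sets: "NN r \<in> sets M" for r
    unfolding NN_def using U_sets by (intro sets.countable_INT) auto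
  have Box_meas: "emeasure M (Box r m g) = ennreal ((2 * hw r m) ^ n)" if "m > 0" for r m g
  proof -
    have hw0: "hw r m \<ge> 0" using K0le Rpos[of r] by (simp add: hw_def)
    have "emeasure M (Box r m g) = (\<Prod>k\<in>{..<n}. emeasure lborel {\<psi> (ctr r m g) k - hw r m .. \<psi> (ctr r m g) k + hw r m})"
      unfolding Box_def M_def by (rule emeasure_PiM) auto
    also have "\<dots> = (\<Prod>k\<in>{..<n}. ennreal (2 * hw r m))"
      using hw0 by (intro prod.cong) auto
    also have "\<dots> = ennreal ((2 * hw r m) ^ n)"
      using hw0 by (subst ennreal_power[symmetric]) auto
    finally show ?thesis .
  qed
  have U_meas: "emeasure M (U r m) \<le> ennreal ((2 * K r * R r) ^ n / real m)" if "m > 0" for r m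
  proof -
    have "emeasure M (U r m) \<le> (\<Sum>g\<in>G m. emeasure M (Box r m g))"
      unfolding U_def using finG Box_sets by (intro emeasure_subadditive_finite) auto
    also have "\<dots> = (\<Sum>g\<in>G m. ennreal ((2 * hw r m) ^ n))"
      using Box_meas that by simp
    also have "\<dots> = ennreal (real m ^ card I * (2 * K r * R r / real m) ^ n)"
    proof -
      have e: "2 * hw r m = 2 * K r * R r / real m" by (simp add: hw_def)
      have "(\<Sum>g\<in>G m. ennreal ((2 * hw r m) ^ n)) = of_nat (card (G m)) * ennreal ((2 * hw r m) ^ n)"
        by simp
      also have "\<dots> = ennreal (real m ^ card I) * ennreal ((2 * K r * R r / real m) ^ n)"
        unfolding cardG e by (simp add: ennreal_of_nat_eq_real_of_nat)
      also have "\<dots> = ennreal (real m ^ card I * (2 * K r * R r / real m) ^ n)"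
        by (rule ennreal_mult'[symmetric]) simp
      finally show ?thesis .
    qed
    also have "\<dots> \<le> ennreal ((2 * K r * R r) ^ n / real m)"
      using power_bound_aux[of "2 * K r * R r" m "card I" n] that cardI K0le[of r] Rpos[of r]
      by (intro ennreal_leI) auto
    finally show ?thesis .
  qed
  have NN_null: "NN r \<in> null_sets M" for r
  proof -
    have "emeasure M (NN r) \<le> ennreal ((2 * K r * R r) ^ n / real (Suc m))" for m
    proof -
      have "emeasure M (NN r) \<le> emeasure M (U r (Suc m))"
        using U_sets by (intro emeasure_mono) (auto simp: NN_def)
      also have "\<dots> \<le> ennreal ((2 * K r * R r) ^ n / real (Suc m))" by (rule U_meas) simp
      finally show ?thesis .
    qed
    then have "emeasure M (NN r) = 0" by (rule ennreal_small_zero)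
    then show ?thesis using NN_sets by auto
  qed
  define Q where "Q = PiE {..<n} (\<lambda>_. {0..a})"
  have QNN: "Q \<subseteq> (\<Union>r. NN r)"
  proof
    fix q assume q: "q \<in> Q"
    then have "\<forall>k<n. 0 \<le> q k \<and> q k \<le> a" by (simp add: Q_def PiE_iff)
    then have "\<exists>\<theta>. \<forall>k<n. \<psi> \<theta> k = q k" by (rule cover)
    then obtain \<theta> where th': "\<forall>k<n. \<psi> \<theta> k = q k" by (rule exE)
    have th: "\<psi> \<theta> k = q k" if "k < n" for k using th' that by simp
    obtain r :: nat where r: "(\<Sum>p\<in>I. \<bar>\<theta> p\<bar>) \<le> real r" using real_arch_simple by blast
    have thR: "\<bar>\<theta> p\<bar> \<le> R r" if "p \<in> I" for p
    proof -
      have "\<bar>\<theta> p\<bar> \<le> (\<Sum>p\<in>I. \<bar>\<theta> p\<bar>)" using finI that by (intro member_le_sum) auto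
      then show ?thesis using r by (simp add: R_def)
    qed
    have "q \<in> U r (Suc m)" for m
    proof -
      have "\<forall>p\<in>I. \<exists>g. g < Suc m \<and> \<bar>\<theta> p - (- R r + (2 * real g + 1) * R r / real (Suc m))\<bar> \<le> R r / real (Suc m)"
      proof
        fix p assume p: "p \<in> I"
        show "\<exists>g. g < Suc m \<and> \<bar>\<theta> p - (- R r + (2 * real g + 1) * R r / real (Suc m))\<bar> \<le> R r / real (Suc m)"
          using cell_pick[OF Rpos[of r] _ thR[OF p], of "Suc m"] by simp
      qed
      from bchoice[OF this] obtain g0 where g0': "\<forall>p\<in>I. g0 p < Suc m \<and>
          \<bar>\<theta> p - (- R r + (2 * real (g0 p) + 1) * R r / real (Suc m))\<bar> \<le> R r / real (Suc m)"
        by blast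
      have g0: "g0 p < Suc m \<and> \<bar>\<theta> p - (- R r + (2 * real (g0 p) + 1) * R r / real (Suc m))\<bar> \<le> R r / real (Suc m)"
        if "p \<in> I" for p using g0' that by blast
      define g where "g = restrict g0 I"
      have gG: "g \<in> G (Suc m)" using g0 by (auto simp: g_def G_def)
      have ctrR: "\<bar>ctr r (Suc m) g p\<bar> \<le> R r" if "p \<in> I" for p
      proof -
        have gp: "g p < Suc m" using g0 that by (simp add: g_def)
        have "real (g p) \<le> real m" using gp by simp
        then have A: "(2 * real (g p) + 1) * R r \<le> (2 * real (Suc m)) * R r"
          using Rpos[of r] by (intro mult_right_mono) auto
        have B: "(2 * real (g p) + 1) * R r \<ge> 0" using Rpos[of r] by simp
        have "(2 * real (g p) + 1) * R r / real (Suc m) \<le> 2 * R r"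
          using A by (simp add: field_simps)
        moreover have "(2 * real (g p) + 1) * R r / real (Suc m) \<ge> 0" using B by simp
        ultimately show ?thesis by (simp add: ctr_def abs_le_iff)
      qed
      have "q \<in> Box r (Suc m) g"
        unfolding Box_def
      proof (rule PiE_I)
        fix k assume k: "k \<in> {..<n}"
        have "\<bar>\<psi> \<theta> k - \<psi> (ctr r (Suc m) g) k\<bar> \<le> K r * (R r / real (Suc m))"
        proof (rule K)
          show "R r / real (Suc m) \<ge> 0" using Rpos[of r] by simp
          show "k < n" using k by simp
          fix p assume p: "p \<in> I"
          show "\<bar>\<theta> p\<bar> \<le> R r \<and> \<bar>ctr r (Suc m) g p\<bar> \<le> R r \<and> \<bar>\<theta> p - ctr r (Suc m) g p\<bar> \<le> R r / real (Suc m)"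
            using thR[OF p] ctrR[OF p] g0[OF p] p by (simp add: ctr_def g_def)
        qed
        then show "q k \<in> {\<psi> (ctr r (Suc m) g) k - hw r (Suc m) .. \<psi> (ctr r (Suc m) g) k + hw r (Suc m)}"
          using th k by (simp add: hw_def abs_le_iff)
      next
        fix k assume "k \<notin> {..<n}" then show "q k = undefined" using q by (auto simp: Q_def PiE_def extensional_def)
      qed
      then show ?thesis using gG by (auto simp: U_def)
    qed
    then show "q \<in> (\<Union>r. NN r)" by (auto simp: NN_def)
  qed
  have "(\<Union>r. NN r) \<in> null_sets M" using NN_null by blast
  then have "emeasure M Q = 0"
  proof -
    have "Q \<in> sets M" unfolding Q_def M_def by (rule sets_PiM_I_finite) auto
    then have "Q \<in> null_sets M" using null_sets_subset[OF \<open>(\<Union>r. NN r) \<in> null_sets M\<close> _ QNN] by blast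
    then show ?thesis by auto
  qed
  moreover have "emeasure M Q = ennreal (a ^ n)"
  proof -
    have "emeasure M Q = (\<Prod>k\<in>{..<n}. emeasure lborel {0..a})"
      unfolding Q_def M_def by (rule emeasure_PiM) auto
    also have "\<dots> = ennreal (a ^ n)" using a by (simp add: prod_ennreal ennreal_power)
    finally show ?thesis .
  qed
  ultimately show False using a by simp
qed

lemma biorth:
  fixes F :: "nat \<Rightarrow> 's \<Rightarrow> real"
  assumes "\<forall>t. (\<forall>s. (\<Sum>j<n. t j * F j s) = 0) \<longrightarrow> (\<forall>j<n. t j = 0)"
  shows "\<exists>S w. finite S \<and> (\<forall>k s. s \<notin> S \<longrightarrow> w k s = 0) \<and>
           (\<forall>k<n. \<forall>j<n. (\<Sum>s\<in>S. w k s * F j s) = (if k = j then 1 else 0))"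
  using assms
proof (induction n)
  case 0
  show ?case by (rule exI[of _ "{}"], rule exI[of _ "\<lambda>_ _. 0"]) simp
next
  case (Suc n)
  have indn: "\<forall>t. (\<forall>s. (\<Sum>j<n. t j * F j s) = 0) \<longrightarrow> (\<forall>j<n. t j = 0)"
  proof (rule allI, rule impI)
    fix t assume t: "\<forall>s. (\<Sum>j<n. t j * F j s) = 0"
    define t' where "t' j = (if j < n then t j else 0)" for j
    have "\<forall>s. (\<Sum>j<Suc n. t' j * F j s) = 0" using t by (simp add: t'_def)
    then have "\<forall>j<Suc n. t' j = 0" using mp[OF spec[OF Suc.prems, of t']] by blast
    then have tt: "t' j = 0" if "j < Suc n" for j using that by blast
    show "\<forall>j<n. t j = 0"
    proof (intro allI impI)
      fix j assume "j < n"
      then show "t j = 0" using tt[of j] by (simp add: t'_def)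
    qed
  qed
  obtain S w where S: "finite S" and w0: "\<And>k s. s \<notin> S \<Longrightarrow> w k s = 0"
    and w: "\<And>k j. k < n \<Longrightarrow> j < n \<Longrightarrow> (\<Sum>s\<in>S. w k s * F j s) = (if k = j then 1 else 0)"
    using Suc.IH[OF indn] by blast
  define cf where "cf j = (\<Sum>s\<in>S. w j s * F n s)" for j
  define g where "g s = F n s - (\<Sum>j<n. cf j * F j s)" for s
  have "\<exists>z. g z \<noteq> 0"
  proof (rule ccontr)
    assume "\<not> ?thesis"
    then have g0: "g s = 0" for s by blast
    define t where "t j = (if j < n then - cf j else 1)" for j
    have "\<forall>s. (\<Sum>j<Suc n. t j * F j s) = 0"
      using g0 by (simp add: t_def g_def sum_negf)
    then have "\<forall>j<Suc n. t j = 0" using mp[OF spec[OF Suc.prems, of t]] by blast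
    then have "t n = 0" by simp
    then show False by (simp add: t_def)
  qed
  then obtain z where z: "g z \<noteq> 0" by blast
  define S' where "S' = insert z S"
  define wn where "wn s = ((if s = z then 1 else 0) - (\<Sum>j<n. w j s * F j z)) / g z" for s
  define w' where "w' k s = (if k = n then wn s else w k s - cf k * wn s)" for k s
  have finS': "finite S'" using S by (simp add: S'_def)
  have ext: "(\<Sum>s\<in>S'. w j s * h s) = (\<Sum>s\<in>S. w j s * h s)" for j h
    unfolding S'_def using S w0 by (intro sum.mono_neutral_right) auto
  have wn_sum: "(\<Sum>s\<in>S'. wn s * h s) = (h z - (\<Sum>j<n. F j z * (\<Sum>s\<in>S. w j s * h s))) / g z" for h
  proof -
    have "(\<Sum>s\<in>S'. wn s * h s) = (\<Sum>s\<in>S'. ((if s = z then 1 else 0) * h s - (\<Sum>j<n. F j z * (w j s * h s))) / g z)"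
    proof (intro sum.cong refl)
      fix s
      have "(\<Sum>j<n. w j s * F j z) * h s = (\<Sum>j<n. F j z * (w j s * h s))"
        by (simp add: sum_distrib_right sum_distrib_left mult.commute mult.left_commute)
      then show "wn s * h s = ((if s = z then 1 else 0) * h s - (\<Sum>j<n. F j z * (w j s * h s))) / g z"
        unfolding wn_def by (simp add: field_simps)
    qed
    also have "\<dots> = ((\<Sum>s\<in>S'. (if s = z then 1 else 0) * h s) - (\<Sum>s\<in>S'. \<Sum>j<n. F j z * (w j s * h s))) / g z"
      by (simp add: sum_subtractf sum_divide_distrib[symmetric])
    also have "(\<Sum>s\<in>S'. (if s = z then 1 else 0) * h s) = h z"
    proof -
      have "(\<Sum>s\<in>S'. (if s = z then 1 else 0) * h s) = (\<Sum>s\<in>S'. if s = z then h s else 0)"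
        by (intro sum.cong) auto
      also have "\<dots> = h z" using finS' by (simp add: S'_def sum.delta)
      finally show ?thesis .
    qed
    also have "(\<Sum>s\<in>S'. \<Sum>j<n. F j z * (w j s * h s)) = (\<Sum>j<n. F j z * (\<Sum>s\<in>S'. w j s * h s))"
      by (subst sum.swap) (simp add: sum_distrib_left)
    also have "\<dots> = (\<Sum>j<n. F j z * (\<Sum>s\<in>S. w j s * h s))"
      using ext by simp
    finally show ?thesis .
  qed
  have wnF: "(\<Sum>s\<in>S'. wn s * F j s) = (if j = n then 1 else 0)" if "j < Suc n" for j
  proof (cases "j = n")
    case True
    have "(\<Sum>s\<in>S'. wn s * F j s) = g z / g z"
      unfolding wn_sum True by (simp add: g_def cf_def mult.commute)
    then show ?thesis using z True by simp
  next
    case False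
    then have jn: "j < n" using that by simp
    have "(\<Sum>i<n. F i z * (\<Sum>s\<in>S. w i s * F j s)) = (\<Sum>i<n. if i = j then F i z else 0)"
      using w jn by (intro sum.cong) auto
    also have "\<dots> = F j z" using jn by (simp add: sum.delta)
    finally show ?thesis unfolding wn_sum using False by simp
  qed
  show ?case
  proof (intro exI conjI allI impI)
    show "finite S'" by (rule finS')
  next
    fix k s assume "s \<notin> S'"
    then show "w' k s = 0" using w0 by (simp add: w'_def wn_def S'_def)
  next
    fix k j assume k: "k < Suc n" and j: "j < Suc n"
    show "(\<Sum>s\<in>S'. w' k s * F j s) = (if k = j then 1 else 0)"
    proof (cases "k = n")
      case True
      then show ?thesis using wnF[OF j] by (auto simp: w'_def)
    next
      case False
      then have kn: "k < n" using k by simp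
      have "(\<Sum>s\<in>S'. w' k s * F j s) = (\<Sum>s\<in>S'. w k s * F j s) - cf k * (\<Sum>s\<in>S'. wn s * F j s)"
        using False by (simp add: w'_def algebra_simps sum_subtractf sum_distrib_left)
      also have "\<dots> = (\<Sum>s\<in>S. w k s * F j s) - cf k * (if j = n then 1 else 0)"
        using ext wnF[OF j] by simp
      also have "\<dots> = (if k = j then 1 else 0)"
      proof (cases "j = n")
        case True then show ?thesis using kn by (simp add: cf_def)
      next
        case False then show ?thesis using w[OF kn] j by simp
      qed
      finally show ?thesis .
    qed
  qed
qed

lemma simplex_in:
  fixes A :: "('a \<Rightarrow> 'b \<Rightarrow> real) set" and c :: "nat \<Rightarrow> ('a \<Rightarrow> 'b \<Rightarrow> real)"
  assumes zero: "(\<lambda>x i. 0) \<in> A" and cen: "\<forall>j<m. is_center A (c j)"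
  shows "(\<forall>j<m. t j \<ge> 0) \<Longrightarrow> (\<Sum>j<m. t j) \<le> 1 \<Longrightarrow> (\<lambda>x i. \<Sum>j<m. t j * c j x i) \<in> A"
  using cen
proof (induction m arbitrary: t)
  case 0
  then show ?case using zero by simp
next
  case (Suc m)
  have cm: "is_center A (c m)" using Suc.prems(3) by simp
  have tm0: "t m \<ge> 0" using Suc.prems(1) by simp
  have rest0: "(\<Sum>j<m. t j) \<ge> 0" using Suc.prems(1) by (intro sum_nonneg) simp
  have tsum: "(\<Sum>j<m. t j) + t m \<le> 1" using Suc.prems(2) by simp
  show ?case
  proof (cases "t m = 1")
    case True
    then have "(\<Sum>j<m. t j) = 0" using rest0 tsum by simp
    then have tz: "\<forall>j\<in>{..<m}. t j = 0" using Suc.prems(1) by (subst sum_nonneg_eq_0_iff[symmetric]) auto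
    have "(\<lambda>x i. \<Sum>j<Suc m. t j * c j x i) = c m"
      using tz True by (auto intro!: ext)
    then show ?thesis using cm by (simp add: is_center_def)
  next
    case False
    then have tm1: "t m < 1" using tsum rest0 by simp
    define s where "s = 1 - t m"
    have s0: "s > 0" using tm1 by (simp add: s_def)
    define t' where "t' j = t j / s" for j
    have "(\<Sum>j<m. t' j) = (\<Sum>j<m. t j) / s" by (simp add: t'_def sum_divide_distrib)
    also have "\<dots> \<le> 1" using tsum s0 by (simp add: s_def field_simps)
    finally have t'sum: "(\<Sum>j<m. t' j) \<le> 1" .
    have t'0: "\<forall>j<m. t' j \<ge> 0" using Suc.prems(1) s0 by (simp add: t'_def)
    have cen': "\<forall>j<m. is_center A (c j)" using Suc.prems(3) by simp
    have gA: "(\<lambda>x i. \<Sum>j<m. t' j * c j x i) \<in> A" using Suc.IH[OF t'0 t'sum cen'] .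
    have "(\<lambda>x i. t m * c m x i + (1 - t m) * (\<Sum>j<m. t' j * c j x i)) \<in> A"
      using cm gA tm0 tm1 unfolding is_center_def by auto
    moreover have "(\<lambda>x i. t m * c m x i + (1 - t m) * (\<Sum>j<m. t' j * c j x i)) = (\<lambda>x i. \<Sum>j<Suc m. t j * c j x i)"
    proof (intro ext)
      fix x i
      have "(1 - t m) * (\<Sum>j<m. t' j * c j x i) = (\<Sum>j<m. t j * c j x i)"
        using s0 by (simp add: sum_distrib_left t'_def s_def[symmetric])
      then show "t m * c m x i + (1 - t m) * (\<Sum>j<m. t' j * c j x i) = (\<Sum>j<Suc m. t j * c j x i)"
        by simp
    qed
    ultimately show ?thesis by simp
  qed
qed

definition net :: "(nat \<times> nat \<times> nat \<times> bool \<Rightarrow> real) \<Rightarrow> network" where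
  "net \<theta> = (\<lambda>l. ((\<lambda>i j. \<theta> (l, i, j, False)), (\<lambda>i. \<theta> (l, i, 0, True))))"

definition parI :: "(nat \<Rightarrow> nat) \<Rightarrow> nat \<Rightarrow> (nat \<times> nat \<times> nat \<times> bool) set" where
  "parI N L = (\<Union>l\<in>{1..L}. ((\<lambda>(i, j). (l, i, j, False)) ` ({..<N l} \<times> {..<N (l - 1)}))
                              \<union> ((\<lambda>i. (l, i, 0, True)) ` {..<N l}))"

lemma parI_card: "card (parI N L) \<le> (\<Sum>l=1..L. (N (l - 1) + 1) * N l)"
proof -
  have "card (parI N L) \<le> (\<Sum>l\<in>{1..L}. card (((\<lambda>(i, j). (l, i, j, False)) ` ({..<N l} \<times> {..<N (l - 1)}))
                              \<union> ((\<lambda>i. (l, i, 0, True)) ` {..<N l})))"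
    unfolding parI_def by (rule card_UN_le) simp
  also have "\<dots> \<le> (\<Sum>l\<in>{1..L}. (N (l - 1) + 1) * N l)"
  proof (rule sum_mono)
    fix l
    have "card (((\<lambda>(i, j). (l, i, j, False)) ` ({..<N l} \<times> {..<N (l - 1)}))
                              \<union> ((\<lambda>i. (l, i, 0, True)) ` {..<N l}))
          \<le> card ((\<lambda>(i, j). (l, i, j, False)) ` ({..<N l} \<times> {..<N (l - 1)})) + card ((\<lambda>i. (l, i, 0::nat, True)) ` {..<N l})"
      by (rule card_Un_le)
    also have "\<dots> \<le> card ({..<N l} \<times> {..<N (l - 1)}) + card {..<N l}"
      by (intro add_mono card_image_le) auto
    also have "\<dots> = (N (l - 1) + 1) * N l" by (simp add: card_cartesian_product)
    finally show "card (((\<lambda>(i, j). (l, i, j, False)) ` ({..<N l} \<times> {..<N (l - 1)}))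
                              \<union> ((\<lambda>i. (l, i, 0, True)) ` {..<N l})) \<le> (N (l - 1) + 1) * N l" .
  qed
  finally show ?thesis .
qed

lemma parI_finite: "finite (parI N L)"
  unfolding parI_def by auto

lemma parI_A: "1 \<le> l \<Longrightarrow> l \<le> L \<Longrightarrow> i < N l \<Longrightarrow> j < N (l - 1) \<Longrightarrow> (l, i, j, False) \<in> parI N L"
  unfolding parI_def by force

lemma parI_b: "1 \<le> l \<Longrightarrow> l \<le> L \<Longrightarrow> i < N l \<Longrightarrow> (l, i, 0, True) \<in> parI N L"
  unfolding parI_def by force

lemma rho_lip:
  assumes "locally_lipschitz \<rho>"
  shows "\<exists>K\<ge>0. \<forall>a b. \<bar>a\<bar> \<le> B \<longrightarrow> \<bar>b\<bar> \<le> B \<longrightarrow> \<bar>\<rho> a - \<rho> b\<bar> \<le> K * \<bar>a - b\<bar>"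
proof -
  have ll: "local_lipschitz {0::real} {-B..B} (\<lambda>t. \<rho>)"
  proof (rule local_lipschitzI)
    fix t x :: real assume "t \<in> {0}" "x \<in> {-B..B}"
    obtain e K where e: "e > 0" "K-lipschitz_on (cball x e) \<rho>"
      using assms unfolding locally_lipschitz_def by blast
    show "\<exists>u>0. \<exists>L. \<forall>t\<in>cball t u \<inter> {0}. L-lipschitz_on (cball x u \<inter> {-B..B}) \<rho>"
      using e by (intro exI[of _ e] conjI exI[of _ K]) (auto intro: lipschitz_on_subset)
  qed
  obtain L where L: "\<And>t. t \<in> {0::real} \<Longrightarrow> L-lipschitz_on {-B..B} \<rho>"
    using local_lipschitz_compact_implies_lipschitz[OF ll] by auto
  have L0: "L-lipschitz_on {-B..B} \<rho>" using L by simp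
  show ?thesis
  proof (cases "B \<ge> 0")
    case True
    then have "L \<ge> 0" using lipschitz_on_nonneg[OF L0] by simp
    moreover have "\<forall>a b. \<bar>a\<bar> \<le> B \<longrightarrow> \<bar>b\<bar> \<le> B \<longrightarrow> \<bar>\<rho> a - \<rho> b\<bar> \<le> L * \<bar>a - b\<bar>"
    proof (intro allI impI)
      fix a b :: real assume "\<bar>a\<bar> \<le> B" "\<bar>b\<bar> \<le> B"
      then have "a \<in> {-B..B}" "b \<in> {-B..B}" by auto
      from lipschitz_onD[OF L0 this] show "\<bar>\<rho> a - \<rho> b\<bar> \<le> L * \<bar>a - b\<bar>" by (simp add: dist_real_def)
    qed
    ultimately show ?thesis by blast
  next
    case False
    then show ?thesis by (intro exI[of _ 0]) auto
  qed
qed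

lemma affine_est:
  fixes A A' h h' :: "nat \<Rightarrow> real"
  assumes H: "\<And>j. j < m \<Longrightarrow> \<bar>h j\<bar> \<le> B \<and> \<bar>h' j\<bar> \<le> B \<and> \<bar>h j - h' j\<bar> \<le> K * \<delta>"
    and AA: "\<And>j. j < m \<Longrightarrow> \<bar>A j\<bar> \<le> R \<and> \<bar>A' j\<bar> \<le> R \<and> \<bar>A j - A' j\<bar> \<le> \<delta>"
    and b: "\<bar>b\<bar> \<le> R" "\<bar>b'\<bar> \<le> R" "\<bar>b - b'\<bar> \<le> \<delta>" and B0: "B \<ge> 0" and R0: "R \<ge> 0"
  shows "\<bar>(\<Sum>j<m. A j * h j) + b\<bar> \<le> real m * R * B + R"
    and "\<bar>((\<Sum>j<m. A j * h j) + b) - ((\<Sum>j<m. A' j * h' j) + b')\<bar> \<le> (real m * (R * K + B) + 1) * \<delta>"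
proof -
  have "\<bar>\<Sum>j<m. A j * h j\<bar> \<le> (\<Sum>j<m. \<bar>A j * h j\<bar>)" by (rule sum_abs)
  also have "\<dots> \<le> (\<Sum>j<m. R * B)"
  proof (rule sum_mono)
    fix j assume "j \<in> {..<m}"
    then have "\<bar>A j\<bar> \<le> R" "\<bar>h j\<bar> \<le> B" using H AA by auto
    then show "\<bar>A j * h j\<bar> \<le> R * B" by (simp add: abs_mult mult_mono R0)
  qed
  also have "\<dots> = real m * R * B" by simp
  finally show "\<bar>(\<Sum>j<m. A j * h j) + b\<bar> \<le> real m * R * B + R" using b by linarith
next
  have "\<bar>(\<Sum>j<m. A j * h j) - (\<Sum>j<m. A' j * h' j)\<bar> = \<bar>\<Sum>j<m. A j * h j - A' j * h' j\<bar>"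
    by (simp add: sum_subtractf)
  also have "\<dots> \<le> (\<Sum>j<m. \<bar>A j * h j - A' j * h' j\<bar>)" by (rule sum_abs)
  also have "\<dots> \<le> (\<Sum>j<m. R * (K * \<delta>) + \<delta> * B)"
  proof (rule sum_mono)
    fix j assume "j \<in> {..<m}"
    then have a: "\<bar>A j\<bar> \<le> R" "\<bar>h' j\<bar> \<le> B" "\<bar>h j - h' j\<bar> \<le> K * \<delta>" "\<bar>A j - A' j\<bar> \<le> \<delta>"
      using H AA by auto
    have "A j * h j - A' j * h' j = A j * (h j - h' j) + (A j - A' j) * h' j" by (simp add: algebra_simps)
    then have "\<bar>A j * h j - A' j * h' j\<bar> \<le> \<bar>A j\<bar> * \<bar>h j - h' j\<bar> + \<bar>A j - A' j\<bar> * \<bar>h' j\<bar>"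
      by (metis abs_mult abs_triangle_ineq)
    also have "\<dots> \<le> R * (K * \<delta>) + \<delta> * B"
      using a by (intro add_mono mult_mono) auto
    finally show "\<bar>A j * h j - A' j * h' j\<bar> \<le> R * (K * \<delta>) + \<delta> * B" .
  qed
  also have "\<dots> = real m * (R * K + B) * \<delta>" by (simp add: algebra_simps)
  finally have "\<bar>(\<Sum>j<m. A j * h j) - (\<Sum>j<m. A' j * h' j)\<bar> \<le> real m * (R * K + B) * \<delta>" .
  then show "\<bar>((\<Sum>j<m. A j * h j) + b) - ((\<Sum>j<m. A' j * h' j) + b')\<bar> \<le> (real m * (R * K + B) + 1) * \<delta>"
    using b(3) by (simp add: algebra_simps)
qed

definition cond :: "(nat \<Rightarrow> nat) \<Rightarrow> nat \<Rightarrow> real \<Rightarrow> (nat \<times> nat \<times> nat \<times> bool \<Rightarrow> real) \<Rightarrow> (nat \<times> nat \<times> nat \<times> bool \<Rightarrow> real) \<Rightarrow> real \<Rightarrow> bool" where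
  "cond N L R \<theta> \<theta>' \<delta> \<longleftrightarrow> \<delta> \<ge> 0 \<and> (\<forall>p\<in>parI N L. \<bar>\<theta> p\<bar> \<le> R \<and> \<bar>\<theta>' p\<bar> \<le> R \<and> \<bar>\<theta> p - \<theta>' p\<bar> \<le> \<delta>)"

lemma affine_net:
  "i < N l \<Longrightarrow> affine_layer N (net \<theta>) l h i = (\<Sum>j<N (l - 1). \<theta> (l, i, j, False) * h j) + \<theta> (l, i, 0, True)"
  by (simp add: affine_layer_def net_def)

lemma affine_net_step:
  assumes c: "cond N L R \<theta> \<theta>' \<delta>" and l: "1 \<le> l" "l \<le> L" and i: "i < N l" and R0: "R \<ge> 0" and B0: "B \<ge> 0"
    and H: "\<And>j. j < N (l - 1) \<Longrightarrow> \<bar>h j\<bar> \<le> B \<and> \<bar>h' j\<bar> \<le> B \<and> \<bar>h j - h' j\<bar> \<le> K * \<delta>"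
  shows "\<bar>affine_layer N (net \<theta>) l h i\<bar> \<le> real (N (l - 1)) * R * B + R"
    and "\<bar>affine_layer N (net \<theta>') l h' i\<bar> \<le> real (N (l - 1)) * R * B + R"
    and "\<bar>affine_layer N (net \<theta>) l h i - affine_layer N (net \<theta>') l h' i\<bar> \<le> (real (N (l - 1)) * (R * K + B) + 1) * \<delta>"
proof -
  have AA: "\<bar>\<theta> (l, i, j, False)\<bar> \<le> R \<and> \<bar>\<theta>' (l, i, j, False)\<bar> \<le> R \<and> \<bar>\<theta> (l, i, j, False) - \<theta>' (l, i, j, False)\<bar> \<le> \<delta>"
    if "j < N (l - 1)" for j
    using c parI_A[of l L i N j, OF l i that] unfolding cond_def by blast
  have AA': "\<bar>\<theta>' (l, i, j, False)\<bar> \<le> R \<and> \<bar>\<theta> (l, i, j, False)\<bar> \<le> R \<and> \<bar>\<theta>' (l, i, j, False) - \<theta> (l, i, j, False)\<bar> \<le> \<delta>"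
    if "j < N (l - 1)" for j
    using AA[OF that] by (simp add: abs_minus_commute)
  have H': "\<bar>h' j\<bar> \<le> B \<and> \<bar>h j\<bar> \<le> B \<and> \<bar>h' j - h j\<bar> \<le> K * \<delta>" if "j < N (l - 1)" for j
    using H[OF that] by (simp add: abs_minus_commute)
  have bb: "\<bar>\<theta> (l, i, 0, True)\<bar> \<le> R \<and> \<bar>\<theta>' (l, i, 0, True)\<bar> \<le> R \<and> \<bar>\<theta> (l, i, 0, True) - \<theta>' (l, i, 0, True)\<bar> \<le> \<delta>"
    using c parI_b[of l L i N, OF l i] unfolding cond_def by blast
  note e1 = affine_est[of "N (l - 1)" h B h' K \<delta> "\<lambda>j. \<theta> (l, i, j, False)" R "\<lambda>j. \<theta>' (l, i, j, False)"
      "\<theta> (l, i, 0, True)" "\<theta>' (l, i, 0, True)", OF H AA _ _ _ B0 R0]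
  note e2 = affine_est[of "N (l - 1)" h' B h K \<delta> "\<lambda>j. \<theta>' (l, i, j, False)" R "\<lambda>j. \<theta> (l, i, j, False)"
      "\<theta>' (l, i, 0, True)" "\<theta> (l, i, 0, True)", OF H' AA' _ _ _ B0 R0]
  show "\<bar>affine_layer N (net \<theta>) l h i\<bar> \<le> real (N (l - 1)) * R * B + R"
    using e1(1) bb by (simp add: affine_net[of i N l, OF i])
  show "\<bar>affine_layer N (net \<theta>') l h' i\<bar> \<le> real (N (l - 1)) * R * B + R"
    using e2(1) bb by (simp add: affine_net[of i N l, OF i] abs_minus_commute)
  show "\<bar>affine_layer N (net \<theta>) l h i - affine_layer N (net \<theta>') l h' i\<bar> \<le> (real (N (l - 1)) * (R * K + B) + 1) * \<delta>"
    using e1(2) bb by (simp add: affine_net[of i N l, OF i])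
qed

lemma hidden_lip:
  assumes rho: "locally_lipschitz \<rho>" and R0: "R \<ge> 0"
  shows "l < L \<Longrightarrow> \<exists>B K. B \<ge> 0 \<and> K \<ge> 0 \<and> (\<forall>\<theta> \<theta>' \<delta>. cond N L R \<theta> \<theta>' \<delta> \<longrightarrow>
     (\<forall>i<N l. \<bar>hidden \<rho> N (net \<theta>) x l i\<bar> \<le> B \<and> \<bar>hidden \<rho> N (net \<theta>') x l i\<bar> \<le> B \<and>
        \<bar>hidden \<rho> N (net \<theta>) x l i - hidden \<rho> N (net \<theta>') x l i\<bar> \<le> K * \<delta>))"
proof (induction l)
  case 0
  have "\<bar>x i\<bar> \<le> (\<Sum>j<N 0. \<bar>x j\<bar>)" if "i < N 0" for i
    using that by (intro member_le_sum) auto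
  then show ?case
    by (intro exI[of _ "\<Sum>j<N 0. \<bar>x j\<bar>"] exI[of _ 0]) (auto intro: sum_nonneg)
next
  case (Suc l)
  then obtain B K where B0: "B \<ge> 0" and K0: "K \<ge> 0" and BK: "\<And>\<theta> \<theta>' \<delta>. cond N L R \<theta> \<theta>' \<delta> \<Longrightarrow>
     (\<forall>i<N l. \<bar>hidden \<rho> N (net \<theta>) x l i\<bar> \<le> B \<and> \<bar>hidden \<rho> N (net \<theta>') x l i\<bar> \<le> B \<and>
        \<bar>hidden \<rho> N (net \<theta>) x l i - hidden \<rho> N (net \<theta>') x l i\<bar> \<le> K * \<delta>)"
    by auto
  define B' where "B' = real (N l) * R * B + R"
  have B'0: "B' \<ge> 0" using B0 R0 by (simp add: B'_def)
  obtain Kr where Kr0: "Kr \<ge> 0" and Kr: "\<And>a b. \<bar>a\<bar> \<le> B' \<Longrightarrow> \<bar>b\<bar> \<le> B' \<Longrightarrow> \<bar>\<rho> a - \<rho> b\<bar> \<le> Kr * \<bar>a - b\<bar>"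
    using rho_lip[OF rho, of B'] by blast
  define B2 where "B2 = \<bar>\<rho> 0\<bar> + Kr * B'"
  define K2 where "K2 = Kr * (real (N l) * (R * K + B) + 1)"
  have rb: "\<bar>\<rho> a\<bar> \<le> B2" if "\<bar>a\<bar> \<le> B'" for a
  proof -
    have "\<bar>\<rho> a - \<rho> 0\<bar> \<le> Kr * \<bar>a - 0\<bar>" using Kr[OF that, of 0] B'0 by simp
    also have "\<dots> \<le> Kr * B'" using that Kr0 by (simp add: mult_left_mono)
    finally show ?thesis unfolding B2_def by linarith
  qed
  show ?case
  proof (intro exI conjI allI impI)
    show "B2 \<ge> 0" using Kr0 B'0 by (simp add: B2_def)
    show "K2 \<ge> 0" using Kr0 K0 B0 R0 by (simp add: K2_def)
    fix \<theta> \<theta>' \<delta> i assume c: "cond N L R \<theta> \<theta>' \<delta>" and i: "i < N (Suc l)"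
    have H: "\<bar>hidden \<rho> N (net \<theta>) x l j\<bar> \<le> B \<and> \<bar>hidden \<rho> N (net \<theta>') x l j\<bar> \<le> B \<and>
        \<bar>hidden \<rho> N (net \<theta>) x l j - hidden \<rho> N (net \<theta>') x l j\<bar> \<le> K * \<delta>" if "j < N (Suc l - 1)" for j
      using BK[OF c] that by simp
    have lL: "1 \<le> Suc l" "Suc l \<le> L" using Suc.prems by auto
    note st = affine_net_step[OF c lL i R0 B0 H]
    define a where "a = affine_layer N (net \<theta>) (Suc l) (hidden \<rho> N (net \<theta>) x l) i"
    define a' where "a' = affine_layer N (net \<theta>') (Suc l) (hidden \<rho> N (net \<theta>') x l) i"
    have a: "\<bar>a\<bar> \<le> B'" "\<bar>a'\<bar> \<le> B'" "\<bar>a - a'\<bar> \<le> (real (N l) * (R * K + B) + 1) * \<delta>"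
      using st by (simp_all add: a_def a'_def B'_def)
    have hs: "hidden \<rho> N (net \<theta>) x (Suc l) i = \<rho> a" "hidden \<rho> N (net \<theta>') x (Suc l) i = \<rho> a'"
      using i by (simp_all add: a_def a'_def)
    show "\<bar>hidden \<rho> N (net \<theta>) x (Suc l) i\<bar> \<le> B2" using hs rb a by simp
    show "\<bar>hidden \<rho> N (net \<theta>') x (Suc l) i\<bar> \<le> B2" using hs rb a by simp
    have "\<bar>\<rho> a - \<rho> a'\<bar> \<le> Kr * \<bar>a - a'\<bar>" using Kr a by simp
    also have "\<dots> \<le> Kr * ((real (N l) * (R * K + B) + 1) * \<delta>)" using a(3) Kr0 by (simp add: mult_left_mono)
    finally show "\<bar>hidden \<rho> N (net \<theta>) x (Suc l) i - hidden \<rho> N (net \<theta>') x (Suc l) i\<bar> \<le> K2 * \<delta>"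
      using hs by (simp add: K2_def mult.assoc)
  qed
qed

lemma real_lip:
  assumes rho: "locally_lipschitz \<rho>" and L1: "1 \<le> L" and R0: "R \<ge> 0"
  shows "\<exists>K\<ge>0. \<forall>\<theta> \<theta>' \<delta>. cond N L R \<theta> \<theta>' \<delta> \<longrightarrow>
     (\<forall>i. \<bar>realization \<rho> N L \<Omega> (net \<theta>) x i - realization \<rho> N L \<Omega> (net \<theta>') x i\<bar> \<le> K * \<delta>)"
proof (cases "x \<in> \<Omega>")
  case False
  then show ?thesis by (intro exI[of _ 0]) (simp add: realization_def)
next
  case True
  have "L - 1 < L" using L1 by simp
  from hidden_lip[OF rho R0 this, of N x]
  obtain B K where B0: "B \<ge> 0" and K0: "K \<ge> 0" and BK: "\<And>\<theta> \<theta>' \<delta>. cond N L R \<theta> \<theta>' \<delta> \<Longrightarrow>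
     (\<forall>i<N (L - 1). \<bar>hidden \<rho> N (net \<theta>) x (L - 1) i\<bar> \<le> B \<and> \<bar>hidden \<rho> N (net \<theta>') x (L - 1) i\<bar> \<le> B \<and>
        \<bar>hidden \<rho> N (net \<theta>) x (L - 1) i - hidden \<rho> N (net \<theta>') x (L - 1) i\<bar> \<le> K * \<delta>)"
    by auto
  define K2 where "K2 = real (N (L - 1)) * (R * K + B) + 1"
  show ?thesis
  proof (intro exI conjI allI impI)
    show "K2 \<ge> 0" using K0 B0 R0 by (simp add: K2_def)
    fix \<theta> \<theta>' \<delta> i assume c: "cond N L R \<theta> \<theta>' \<delta>"
    show "\<bar>realization \<rho> N L \<Omega> (net \<theta>) x i - realization \<rho> N L \<Omega> (net \<theta>') x i\<bar> \<le> K2 * \<delta>"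
    proof (cases "i < N L")
      case False
      have "K2 * \<delta> \<ge> 0" using c K0 B0 R0 by (simp add: K2_def cond_def)
      then show ?thesis using False True by (simp add: realization_def affine_layer_def)
    next
      case i: True
      have H: "\<bar>hidden \<rho> N (net \<theta>) x (L - 1) j\<bar> \<le> B \<and> \<bar>hidden \<rho> N (net \<theta>') x (L - 1) j\<bar> \<le> B \<and>
        \<bar>hidden \<rho> N (net \<theta>) x (L - 1) j - hidden \<rho> N (net \<theta>') x (L - 1) j\<bar> \<le> K * \<delta>" if "j < N (L - 1)" for j
        using BK[OF c] that by simp
      note st = affine_net_step[OF c L1 order_refl i R0 B0 H]
      then show ?thesis using True by (simp add: realization_def K2_def)
    qed
  qed
qed

theorem propositionC4:
  fixes \<rho> :: "real \<Rightarrow> real" and N :: "nat \<Rightarrow> nat" and L d :: nat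
    and \<Omega> :: "(nat \<Rightarrow> real) set" and C :: "((nat \<Rightarrow> real) \<Rightarrow> (nat \<Rightarrow> real)) set"
  assumes "1 \<le> L" and "N 0 = d"
    and "\<Omega> \<subseteq> {x. \<forall>i\<ge>d. x i = 0}"
    and "locally_lipschitz \<rho>"
    and "finite C" and "\<forall>f\<in>C. is_center (RNN \<rho> N L \<Omega>) f" and "lin_indep C"
  shows "card C \<le> (\<Sum>l=1..L. (N (l - 1) + 1) * N l)"
proof (rule ccontr)
  note L1 = assms(1) and rho = assms(4) and finC = assms(5) and cenC = assms(6) and li = assms(7)
  assume "\<not> card C \<le> (\<Sum>l=1..L. (N (l - 1) + 1) * N l)"
  define n where "n = card C"
  define I where "I = parI N L"
  have In: "card I < n" using parI_card[of N L] \<open>\<not> card C \<le> _\<close> by (simp add: I_def n_def)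
  have finI: "finite I" by (simp add: I_def parI_finite)
  have n0: "n > 0" using In by simp
  obtain c where bij: "bij_betw c {..<n} C"
    using ex_bij_betw_nat_finite[OF finC] by (auto simp: n_def lessThan_atLeast0)
  have injc: "inj_on c {..<n}" and cC: "\<And>j. j < n \<Longrightarrow> c j \<in> C"
    using bij by (auto simp: bij_betw_def)
  define F where "F j s = c j (fst s) (snd s)" for j s
  have indep: "\<forall>t. (\<forall>s. (\<Sum>j<n. t j * F j s) = 0) \<longrightarrow> (\<forall>j<n. t j = 0)"
  proof (rule allI, rule impI)
    fix t assume t: "\<forall>s. (\<Sum>j<n. t j * F j s) = 0"
    define cc where "cc f = t (the_inv_into {..<n} c f)" for f
    have "\<forall>x i. (\<Sum>f\<in>C. cc f * f x i) = 0"
    proof (intro allI)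
      fix x i
      have "(\<Sum>f\<in>C. cc f * f x i) = (\<Sum>j\<in>{..<n}. cc (c j) * c j x i)"
        using bij by (rule sum.reindex_bij_betw[symmetric])
      also have "\<dots> = (\<Sum>j<n. t j * F j (x, i))"
        using injc by (intro sum.cong) (auto simp: cc_def F_def the_inv_into_f_f)
      also have "\<dots> = 0" using t by blast
      finally show "(\<Sum>f\<in>C. cc f * f x i) = 0" .
    qed
    then have cc0: "\<forall>f\<in>C. cc f = 0" using mp[OF spec[OF li[unfolded lin_indep_def], of cc]] by blast
    show "\<forall>j<n. t j = 0"
    proof (intro allI impI)
      fix j assume j: "j < n"
      have "cc (c j) = 0" using cc0 cC[OF j] by blast
      then show "t j = 0" using injc j by (simp add: cc_def the_inv_into_f_f)
    qed
  qed
  obtain S w where finS: "finite S"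
    and w: "\<forall>k<n. \<forall>j<n. (\<Sum>s\<in>S. w k s * F j s) = (if k = j then 1 else 0)"
    using biorth[OF indep] by blast
  define \<psi> where "\<psi> \<theta> k = (\<Sum>s\<in>S. w k s * realization \<rho> N L \<Omega> (net \<theta>) (fst s) (snd s))" for \<theta> k
  show False
  proof (rule core_dim[OF finI In, of "1 / real n" \<psi>])
    show "0 < 1 / real n" using n0 by simp
  next
    fix R :: real assume R: "R > 0"
    have "\<forall>s::(nat \<Rightarrow> real) \<times> nat. \<exists>K\<ge>0. \<forall>\<theta> \<theta>' \<delta>. cond N L R \<theta> \<theta>' \<delta> \<longrightarrow>
     (\<forall>i. \<bar>realization \<rho> N L \<Omega> (net \<theta>) (fst s) i - realization \<rho> N L \<Omega> (net \<theta>') (fst s) i\<bar> \<le> K * \<delta>)"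
    proof
      fix s :: "(nat \<Rightarrow> real) \<times> nat"
      show "\<exists>K\<ge>0. \<forall>\<theta> \<theta>' \<delta>. cond N L R \<theta> \<theta>' \<delta> \<longrightarrow>
     (\<forall>i. \<bar>realization \<rho> N L \<Omega> (net \<theta>) (fst s) i - realization \<rho> N L \<Omega> (net \<theta>') (fst s) i\<bar> \<le> K * \<delta>)"
        by (rule real_lip[OF rho L1]) (use R in simp)
    qed
    from choice[OF this] obtain Ks where Ks': "\<forall>s::(nat \<Rightarrow> real) \<times> nat. Ks s \<ge> 0 \<and> (\<forall>\<theta> \<theta>' \<delta>. cond N L R \<theta> \<theta>' \<delta> \<longrightarrow>
     (\<forall>i. \<bar>realization \<rho> N L \<Omega> (net \<theta>) (fst s) i - realization \<rho> N L \<Omega> (net \<theta>') (fst s) i\<bar> \<le> Ks s * \<delta>))"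
      by (rule exE)
    define K where "K = (\<Sum>k<n. \<Sum>s\<in>S. \<bar>w k s\<bar> * Ks s)"
    show "\<exists>K. \<forall>\<theta> \<theta>' \<delta>. \<delta> \<ge> 0 \<and> (\<forall>p\<in>I. \<bar>\<theta> p\<bar> \<le> R \<and> \<bar>\<theta>' p\<bar> \<le> R \<and> \<bar>\<theta> p - \<theta>' p\<bar> \<le> \<delta>)
               \<longrightarrow> (\<forall>k<n. \<bar>\<psi> \<theta> k - \<psi> \<theta>' k\<bar> \<le> K * \<delta>)"
    proof (intro exI[of _ K] allI impI)
      fix \<theta> \<theta>' \<delta> k
      assume c0: "\<delta> \<ge> 0 \<and> (\<forall>p\<in>I. \<bar>\<theta> p\<bar> \<le> R \<and> \<bar>\<theta>' p\<bar> \<le> R \<and> \<bar>\<theta> p - \<theta>' p\<bar> \<le> \<delta>)" and k: "k < n"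
      have c: "cond N L R \<theta> \<theta>' \<delta>" using c0 by (simp add: cond_def I_def)
      have d: "\<bar>realization \<rho> N L \<Omega> (net \<theta>) (fst s) (snd s) - realization \<rho> N L \<Omega> (net \<theta>') (fst s) (snd s)\<bar> \<le> Ks s * \<delta>" for s
      proof -
        have "\<forall>\<theta> \<theta>' \<delta>. cond N L R \<theta> \<theta>' \<delta> \<longrightarrow>
          (\<forall>i. \<bar>realization \<rho> N L \<Omega> (net \<theta>) (fst s) i - realization \<rho> N L \<Omega> (net \<theta>') (fst s) i\<bar> \<le> Ks s * \<delta>)"
          using spec[OF Ks', of s] by (rule conjunct2)
        then show ?thesis using c by blast
      qed
      have "\<bar>\<psi> \<theta> k - \<psi> \<theta>' k\<bar> = \<bar>\<Sum>s\<in>S. w k s * (realization \<rho> N L \<Omega> (net \<theta>) (fst s) (snd s) - realization \<rho> N L \<Omega> (net \<theta>') (fst s) (snd s))\<bar>"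
        by (simp add: \<psi>_def sum_subtractf algebra_simps)
      also have "\<dots> \<le> (\<Sum>s\<in>S. \<bar>w k s * (realization \<rho> N L \<Omega> (net \<theta>) (fst s) (snd s) - realization \<rho> N L \<Omega> (net \<theta>') (fst s) (snd s))\<bar>)"
        by (rule sum_abs)
      also have "\<dots> \<le> (\<Sum>s\<in>S. \<bar>w k s\<bar> * Ks s * \<delta>)"
        using d by (intro sum_mono) (simp add: abs_mult mult.assoc mult_left_mono)
      also have "\<dots> = (\<Sum>s\<in>S. \<bar>w k s\<bar> * Ks s) * \<delta>" by (simp add: sum_distrib_right)
      also have "\<dots> \<le> K * \<delta>"
      proof (rule mult_right_mono)
        show "\<delta> \<ge> 0" using c0 by simp
        show "(\<Sum>s\<in>S. \<bar>w k s\<bar> * Ks s) \<le> K"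
          unfolding K_def using k Ks'
          by (intro member_le_sum[of k "{..<n}" "\<lambda>k. \<Sum>s\<in>S. \<bar>w k s\<bar> * Ks s"]) (auto intro!: sum_nonneg)
      qed
      finally show "\<bar>\<psi> \<theta> k - \<psi> \<theta>' k\<bar> \<le> K * \<delta>" .
    qed
  next
    fix q :: "nat \<Rightarrow> real" assume q: "\<forall>k<n. 0 \<le> q k \<and> q k \<le> 1 / real n"
    have zero: "(\<lambda>x i. 0) \<in> RNN \<rho> N L \<Omega>"
    proof -
      have "(\<lambda>x i. 0) = realization \<rho> N L \<Omega> (\<lambda>l. ((\<lambda>i j. 0), (\<lambda>i. 0)))"
        by (intro ext) (simp add: realization_def affine_layer_def)
      then show ?thesis unfolding RNN_def by blast
    qed
    have cen: "\<forall>j<n. is_center (RNN \<rho> N L \<Omega>) (c j)" using cenC cC by blast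
    have qsum: "(\<Sum>j<n. q j) \<le> 1"
    proof -
      have "(\<Sum>j<n. q j) \<le> (\<Sum>j<n. 1 / real n)" using q by (intro sum_mono) auto
      also have "\<dots> = 1" using n0 by simp
      finally show ?thesis .
    qed
    have "(\<lambda>x i. \<Sum>j<n. q j * c j x i) \<in> RNN \<rho> N L \<Omega>"
      using simplex_in[OF zero cen, of q] q qsum by simp
    then obtain \<Phi> where \<Phi>: "(\<lambda>x i. \<Sum>j<n. q j * c j x i) = realization \<rho> N L \<Omega> \<Phi>"
      unfolding RNN_def by blast
    define \<theta> where "\<theta> = (\<lambda>(l, i, j, b). if b then snd (\<Phi> l) i else fst (\<Phi> l) i j)"
    have net\<theta>: "net \<theta> = \<Phi>"
      by (intro ext) (simp add: net_def \<theta>_def)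
    show "\<exists>\<theta>. \<forall>k<n. \<psi> \<theta> k = q k"
    proof (intro exI[of _ \<theta>] allI impI)
      fix k assume k: "k < n"
      have "\<psi> \<theta> k = (\<Sum>s\<in>S. w k s * (\<Sum>j<n. q j * F j s))"
        unfolding \<psi>_def net\<theta> \<Phi>[symmetric] by (simp add: F_def)
      also have "\<dots> = (\<Sum>j<n. q j * (\<Sum>s\<in>S. w k s * F j s))"
        by (simp add: sum_distrib_left sum.swap[of _ S] mult.left_commute)
      also have "\<dots> = (\<Sum>j<n. if j = k then q j else 0)"
        using w k by (intro sum.cong) auto
      also have "\<dots> = q k" using k by (simp add: sum.delta)
      finally show "\<psi> \<theta> k = q k" .
    qed
  qed
qed

end
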